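(* Let $\kappa>0$ and $\tau=\inf\{m\ge0:r_m^2\le\kappa\}$. Then for every $m\ge0$, \[\|\widehat F^{(\tau)}-\widehat F^{(m)}\|_n^2\le\|\widehat F^{(m)}-f^*\|_n^2+2|c_m|+(\kappa-\|\varepsilon\|_n^2)\mathbf 1\{\tau<m\}+(\|\varepsilon\|_n^2+\Delta(r_\tau^2)-\kappa)\mathbf 1\{\tau>m\},\] where $\Delta(r_m^2)=r_{m-1}^2-r_m^2$.
   Context: Let $Y=f^*+\varepsilon\in\mathbb R^n$ with $f^*,\varepsilon\in\mathbb R^n$, and let $\mathbf X\in\mathbb R^{n\times p}$ have rank $n$ with columns $X^{(j)}$. $\langle a,b\rangle_n=n^{-1}\sum_ia_ib_i$, $\|\cdot\|_n$ its norm, $\|\varepsilon\|_n^2=n^{-1}\sum_i\varepsilon_i^2$. $\widehat\Pi_J$: $\langle\cdot,\cdot\rangle_n$-orthogonal projection onto $\mathrm{span}\{X^{(j)}:j\in J\}$. OMP: $\widehat F^{(0)}=0,\widehat J_0=\emptyset$, $\widehat j_{m+1}\in\arg\max_j|\langle Y-\widehat F^{(m)},X^{(j)}/\|X^{(j)}\|_n\rangle_n|$, $\widehat J_{m+1}=\widehat J_m\cup\{\widehat j_{m+1}\}$, $\widehat F^{(m+1)}=\widehat\Pi_{\widehat J_{m+1}}Y$; $\widehat\Pi_m=\widehat\Pi_{\widehat J_m}$; $r_m^2=\|Y-\widehat F^{(m)}\|_n^2$; cross term $c_m=\langle(I-\widehat\Pi_m)f^*,\varepsilon\rangle_n$. 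*)

theory Defs
  imports "HOL-Analysis.Analysis"
begin

definition ip_n :: "real^'n \<Rightarrow> real^'n \<Rightarrow> real" where
  "ip_n a b = (\<Sum>i\<in>UNIV. a$i * b$i) / real CARD('n)"

definition nrm_n :: "real^'n \<Rightarrow> real" where
  "nrm_n a = sqrt (ip_n a a)"

definition proj_n :: "(real^'n) set \<Rightarrow> real^'n \<Rightarrow> real^'n" where
  "proj_n S y = (THE z. z \<in> span S \<and> (\<forall>s\<in>span S. ip_n (y - z) s = 0))"

definition cols :: "real^'p^'n \<Rightarrow> 'p set \<Rightarrow> (real^'n) set" where
  "cols X J = (\<lambda>j. column j X) ` J"

text \<open>OMP: sel m is the index selected at step m+1, so J_m = sel ` {..<m}.\<close>
definition omp_J :: "(nat \<Rightarrow> 'p) \<Rightarrow> nat \<Rightarrow> 'p set" where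
  "omp_J sel m = sel ` {..<m}"

definition omp_F :: "real^'p^'n \<Rightarrow> real^'n \<Rightarrow> (nat \<Rightarrow> 'p) \<Rightarrow> nat \<Rightarrow> real^'n" where
  "omp_F X Y sel m = proj_n (cols X (omp_J sel m)) Y"

text \<open>sel is a valid OMP selection sequence (any argmax tie-breaking).\<close>
definition omp_sel :: "real^'p^'n \<Rightarrow> real^'n \<Rightarrow> (nat \<Rightarrow> 'p) \<Rightarrow> bool" where
  "omp_sel X Y sel \<longleftrightarrow> (\<forall>m k.
     \<bar>ip_n (Y - omp_F X Y sel m) (column k X /\<^sub>R nrm_n (column k X))\<bar>
     \<le> \<bar>ip_n (Y - omp_F X Y sel m) (column (sel m) X /\<^sub>R nrm_n (column (sel m) X))\<bar>)"

definition omp_r2 :: "real^'p^'n \<Rightarrow> real^'n \<Rightarrow> (nat \<Rightarrow> 'p) \<Rightarrow> nat \<Rightarrow> real" where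
  "omp_r2 X Y sel m = (nrm_n (Y - omp_F X Y sel m))\<^sup>2"

end

theory Submission
  imports Defs
begin

lemma ip_inner: "ip_n (a::real^'n) b = inner a b / real CARD('n)"
  unfolding ip_n_def inner_vec_def by simp

lemma ip_nonneg: "ip_n (a::real^'n) a \<ge> 0"
  by (simp add: ip_inner)

lemma nrm_sq: "(nrm_n (a::real^'n))\<^sup>2 = ip_n a a"
  unfolding nrm_n_def using ip_nonneg by simp

lemma ip_sym: "ip_n (a::real^'n) b = ip_n b a"
  by (simp add: ip_inner inner_commute)

lemma ip_add_l: "ip_n (a + b::real^'n) c = ip_n a c + ip_n b c"
  by (simp add: ip_inner inner_add_left add_divide_distrib)
lemma ip_add_r: "ip_n c (a + b::real^'n) = ip_n c a + ip_n c b"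
  by (simp add: ip_inner inner_add_right add_divide_distrib)
lemma ip_diff_l: "ip_n (a - b::real^'n) c = ip_n a c - ip_n b c"
  by (simp add: ip_inner inner_diff_left diff_divide_distrib)
lemma ip_diff_r: "ip_n c (a - b::real^'n) = ip_n c a - ip_n c b"
  by (simp add: ip_inner inner_diff_right diff_divide_distrib)
lemma ip_zero_iff: "ip_n (a::real^'n) a = 0 \<longleftrightarrow> a = 0"
  by (simp add: ip_inner)
lemma ip_scale_r: "ip_n c (t *\<^sub>R (a::real^'n)) = t * ip_n c a"
  by (simp add: ip_inner)

definition projP :: "(real^'n) set \<Rightarrow> real^'n \<Rightarrow> real^'n \<Rightarrow> bool" where
  "projP S y z \<longleftrightarrow> z \<in> span S \<and> (\<forall>s\<in>span S. ip_n (y - z) s = 0)"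

lemma projP_unique: assumes "projP S y z1" "projP S y z2" shows "z1 = z2"
proof -
  have d: "z1 - z2 \<in> span S" using assms unfolding projP_def by (simp add: span_diff)
  have "ip_n (y - z2) (z1 - z2) - ip_n (y - z1) (z1 - z2) = 0"
    using assms d unfolding projP_def by simp
  hence "ip_n (z1 - z2) (z1 - z2) = 0" by (simp add: ip_diff_l)
  thus ?thesis by (simp add: ip_zero_iff)
qed

lemma projP_ex: "\<exists>z. projP S (y::real^'n) z"
proof -
  obtain a b where ab: "a \<in> span S" "\<And>w. w \<in> span S \<Longrightarrow> orthogonal b w" "y = a + b"
    using orthogonal_subspace_decomp_exists by blast
  have "projP S y a" unfolding projP_def using ab by (auto simp: ip_inner orthogonal_def)
  thus ?thesis by blast
qed

lemma proj_P: "projP S y (proj_n S y)"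
proof -
  obtain z where "projP S y z" using projP_ex by blast
  hence "projP S y (THE z. projP S y z)" by (rule theI) (use projP_unique \<open>projP S y z\<close> in blast)
  thus ?thesis unfolding proj_n_def projP_def by simp
qed

lemma proj_span: "proj_n S y \<in> span S" using proj_P unfolding projP_def by blast
lemma proj_orth: "s \<in> span S \<Longrightarrow> ip_n (y - proj_n S y) s = 0" using proj_P unfolding projP_def by blast

lemma proj_add: "proj_n S (a + b) = proj_n S a + proj_n S (b::real^'n)"
proof -
  have "projP S (a+b) (proj_n S a + proj_n S b)"
    unfolding projP_def
  proof
    show "proj_n S a + proj_n S b \<in> span S" by (simp add: proj_span span_add)
    show "\<forall>s\<in>span S. ip_n (a + b - (proj_n S a + proj_n S b)) s = 0"
    proof
      fix s assume s: "s \<in> span S"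
      have "a + b - (proj_n S a + proj_n S b) = (a - proj_n S a) + (b - proj_n S b)" by simp
      thus "ip_n (a + b - (proj_n S a + proj_n S b)) s = 0" using proj_orth[OF s, of a] proj_orth[OF s, of b] by (simp only: ip_add_l)
    qed
  qed
  thus ?thesis using proj_P projP_unique by blast
qed

lemma pyth: "ip_n a b = 0 \<Longrightarrow> (nrm_n (a + b::real^'n))\<^sup>2 = (nrm_n a)\<^sup>2 + (nrm_n b)\<^sup>2"
  by (simp add: nrm_sq ip_add_l ip_add_r ip_sym)

lemma span_cols: assumes "rank (X::real^'p^'n) = CARD('n)" shows "span (cols X UNIV) = UNIV"
proof -
  have "cols X UNIV = columns X" unfolding cols_def columns_def by auto
  moreover have "dim (columns X) = DIM(real^'n)" using assms by (simp add: column_rank_def)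
  ultimately show ?thesis by (metis dim_eq_full)
qed


lemma omp_key:
  fixes X :: "real^'p^'n"
  assumes rk: "rank X = CARD('n)" and os: "omp_sel X Y sel"
    and R: "Y - omp_F X Y sel m \<noteq> 0"
  shows "column (sel m) X \<notin> span (cols X (omp_J sel m))"
proof
  let ?R = "Y - omp_F X Y sel m"
  assume inspan: "column (sel m) X \<in> span (cols X (omp_J sel m))"
  have "ip_n ?R (column (sel m) X) = 0"
    unfolding omp_F_def by (rule proj_orth[OF inspan])
  hence z: "ip_n ?R (column (sel m) X /\<^sub>R nrm_n (column (sel m) X)) = 0"
    by (simp add: ip_scale_r)
  have allk: "ip_n ?R (column k X) = 0" for k
  proof -
    have "\<bar>ip_n ?R (column k X /\<^sub>R nrm_n (column k X))\<bar> \<le> 0"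
      using spec[OF spec[OF os[unfolded omp_sel_def], of m], of k] z by simp
    hence h: "inverse (nrm_n (column k X)) * ip_n ?R (column k X) = 0"
      by (simp add: ip_scale_r)
    show ?thesis
    proof (cases "nrm_n (column k X) = 0")
      case True
      hence "ip_n (column k X) (column k X) = 0" using nrm_sq[of "column k X"] by simp
      hence "column k X = 0" by (simp add: ip_zero_iff)
      thus ?thesis by (simp add: ip_inner)
    next
      case False thus ?thesis using h by simp
    qed
  qed
  have "\<forall>x\<in>cols X UNIV. orthogonal ?R x"
    using allk unfolding cols_def orthogonal_def by (auto simp: ip_inner)
  hence "orthogonal ?R ?R"
    using orthogonal_to_span span_cols[OF rk] by blast
  thus False using R by (simp add: orthogonal_def)
qed

lemma omp_exists_zero:
  fixes X :: "real^'p^'n"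
  assumes rk: "rank X = CARD('n)" and os: "omp_sel X Y sel"
  shows "\<exists>t. Y - omp_F X Y sel t = 0"
proof (rule ccontr)
  assume "\<not> ?thesis"
  hence nz: "\<And>t. Y - omp_F X Y sel t \<noteq> 0" by blast
  have "m \<le> dim (cols X (omp_J sel m))" for m
  proof (induction m)
    case 0 then show ?case by simp
  next
    case (Suc m)
    have "cols X (omp_J sel (Suc m)) = insert (column (sel m) X) (cols X (omp_J sel m))"
      unfolding cols_def omp_J_def by (simp add: lessThan_Suc)
    moreover have "column (sel m) X \<notin> span (cols X (omp_J sel m))"
      using omp_key[OF rk os nz] .
    ultimately show ?case using Suc by (simp add: dim_insert)
  qed
  from this[of "Suc CARD('n)"] show False
    using dim_subset_UNIV_cart[of "cols X (omp_J sel (Suc CARD('n)))"] by simp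
qed

theorem lemma2p2:
  fixes X :: "real^'p^'n" and fstar eps :: "real^'n" and sel :: "nat \<Rightarrow> 'p"
    and \<kappa> :: real and m :: nat
  assumes "rank X = CARD('n)"
    and "omp_sel X (fstar + eps) sel"
    and "\<kappa> > 0"
  defines "Y \<equiv> fstar + eps"
    and "\<tau> \<equiv> (LEAST t. omp_r2 X (fstar + eps) sel t \<le> \<kappa>)"
  shows "(nrm_n (omp_F X Y sel \<tau> - omp_F X Y sel m))\<^sup>2
    \<le> (nrm_n (omp_F X Y sel m - fstar))\<^sup>2
       + 2 * \<bar>ip_n (fstar - proj_n (cols X (omp_J sel m)) fstar) eps\<bar>
       + (if \<tau> < m then \<kappa> - (nrm_n eps)\<^sup>2 else 0)
       + (if \<tau> > m then (nrm_n eps)\<^sup>2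
            + (omp_r2 X Y sel (\<tau> - 1) - omp_r2 X Y sel \<tau>) - \<kappa> else 0)"
proof -
  let ?F = "omp_F X Y sel"
  let ?r = "omp_r2 X Y sel"
  have os: "omp_sel X Y sel" using assms(2) unfolding Y_def .
  have tau: "\<tau> = (LEAST t. ?r t \<le> \<kappa>)" unfolding \<tau>_def Y_def ..
  obtain t0 where t0: "Y - ?F t0 = 0" using omp_exists_zero[OF assms(1) os] by blast
  have "?r t0 \<le> \<kappa>" using t0 assms(3) unfolding omp_r2_def by (simp add: nrm_n_def ip_inner)
  hence rtau: "?r \<tau> \<le> \<kappa>" unfolding tau by (rule LeastI)
  have rtau1: "\<tau> > 0 \<Longrightarrow> \<not> ?r (\<tau> - 1) \<le> \<kappa>" unfolding tau by (rule not_less_Least) simp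
  have nest: "(nrm_n (Y - ?F j))\<^sup>2 = (nrm_n (Y - ?F k))\<^sup>2 + (nrm_n (?F k - ?F j))\<^sup>2"
    if "j \<le> k" for j k
  proof -
    have sub: "cols X (omp_J sel j) \<subseteq> cols X (omp_J sel k)"
      using that unfolding cols_def omp_J_def by auto
    have "?F k - ?F j \<in> span (cols X (omp_J sel k))"
      unfolding omp_F_def using span_mono[OF sub] proj_span by (blast intro: span_diff)
    hence "ip_n (Y - ?F k) (?F k - ?F j) = 0" unfolding omp_F_def by (rule proj_orth)
    hence "(nrm_n ((Y - ?F k) + (?F k - ?F j)))\<^sup>2 = (nrm_n (Y - ?F k))\<^sup>2 + (nrm_n (?F k - ?F j))\<^sup>2"
      by (rule pyth)
    thus ?thesis by simp
  qed
  have nsym: "(nrm_n (a - b))\<^sup>2 = (nrm_n (b - a))\<^sup>2" for a b :: "real^'n"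
    by (simp add: nrm_sq ip_diff_l ip_diff_r ip_sym)
  let ?P = "proj_n (cols X (omp_J sel m))"
  define a where "a = fstar - ?P fstar"
  define pe where "pe = ?P eps"
  define e' where "e' = eps - pe"
  have Fm: "?F m = ?P fstar + pe" unfolding omp_F_def Y_def pe_def by (rule proj_add)
  have pe_sp: "pe \<in> span (cols X (omp_J sel m))" unfolding pe_def by (rule proj_span)
  have ape: "ip_n a pe = 0" unfolding a_def by (rule proj_orth[OF pe_sp])
  have epe: "ip_n e' pe = 0" unfolding e'_def pe_def by (rule proj_orth[OF proj_span])
  have f1: "(nrm_n eps)\<^sup>2 = (nrm_n pe)\<^sup>2 + (nrm_n e')\<^sup>2"
  proof -
    have "ip_n pe e' = 0" using epe by (simp add: ip_sym)
    hence "(nrm_n (pe + e'))\<^sup>2 = (nrm_n pe)\<^sup>2 + (nrm_n e')\<^sup>2" by (rule pyth)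
    thus ?thesis unfolding e'_def by simp
  qed
  have f2: "(nrm_n (?F m - fstar))\<^sup>2 = (nrm_n pe)\<^sup>2 + (nrm_n a)\<^sup>2"
  proof -
    have "?F m - fstar = pe + (- a)" unfolding Fm a_def by simp
    moreover have "ip_n pe (- a) = 0" using ape by (simp add: ip_inner inner_commute)
    hence "(nrm_n (pe + (- a)))\<^sup>2 = (nrm_n pe)\<^sup>2 + (nrm_n (- a))\<^sup>2" by (rule pyth)
    ultimately show ?thesis by (simp add: nrm_sq ip_inner)
  qed
  have f3: "?r m = (nrm_n a)\<^sup>2 + 2 * ip_n a eps + (nrm_n e')\<^sup>2"
  proof -
    have "Y - ?F m = Y - (?P fstar + pe)" using Fm by simp
    also have "\<dots> = a + e'" unfolding a_def e'_def Y_def by simp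
    finally have "Y - ?F m = a + e'" .
    hence "?r m = ip_n (a + e') (a + e')" unfolding omp_r2_def by (simp add: nrm_sq)
    also have "\<dots> = ip_n a a + 2 * ip_n a e' + ip_n e' e'"
      by (simp add: ip_add_l ip_add_r ip_sym)
    also have "ip_n a e' = ip_n a eps" unfolding e'_def using ape by (simp add: ip_diff_r)
    finally show ?thesis by (simp add: nrm_sq)
  qed
  have cm: "ip_n (fstar - ?P fstar) eps = ip_n a eps" unfolding a_def ..
  have nn: "(nrm_n x)\<^sup>2 \<ge> 0" for x :: "real^'n" by simp
  show ?thesis
  proof (cases "\<tau> < m")
    case True
    have "(nrm_n (?F \<tau> - ?F m))\<^sup>2 = ?r \<tau> - ?r m"
      using nest[of \<tau> m] True nsym unfolding omp_r2_def by simp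
    thus ?thesis using True rtau f1 f2 f3 cm zero_le_power2[of "nrm_n pe"] zero_le_power2[of "nrm_n a"] zero_le_power2[of "nrm_n e'"] abs_ge_self[of "ip_n a eps"] abs_ge_minus_self[of "ip_n a eps"] by simp (insert zero_le_power2[of "nrm_n a"] zero_le_power2[of "nrm_n pe"] zero_le_power2[of "nrm_n e'"], linarith)
  next
    case False
    show ?thesis
    proof (cases "\<tau> = m")
      case True thus ?thesis using nn[of "?F m - fstar"] by (simp add: nrm_n_def ip_inner)
    next
      case False
      hence gt: "\<tau> > m" using \<open>\<not> \<tau> < m\<close> by simp
      have "(nrm_n (?F \<tau> - ?F m))\<^sup>2 = ?r m - ?r \<tau>"
        using nest[of m \<tau>] gt unfolding omp_r2_def by simp
      thus ?thesis using gt rtau1 f1 f2 f3 cm zero_le_power2[of "nrm_n pe"] zero_le_power2[of "nrm_n a"] zero_le_power2[of "nrm_n e'"] abs_ge_self[of "ip_n a eps"] abs_ge_minus_self[of "ip_n a eps"] by simp (insert zero_le_power2[of "nrm_n a"] zero_le_power2[of "nrm_n pe"] zero_le_power2[of "nrm_n e'"], linarith)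
    qed
  qed
qed

end
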